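(* Let $0\le t_o<t_f$ be real numbers, let $p:[t_o,t_f)\to\mathbb{R}$ and $q:[t_o,t_f)\to\mathbb{R}_{\ge0}$ be signals such that $q(t)=0\implies p(t)=0$ for every $t\in[t_o,t_f)$, and let $r(\tau)=\alpha\tau$ ($\tau>0$) with $\alpha\in\mathbb{R}$ (so $\dot r(0)=\alpha$). For $t_o\le t_0<t_1\le t_f$ with $\int_{t_0}^{t_1}q(t)\,dt>0$ define $\psi(t_0,t_1)=\dfrac{\int_{t_0}^{t_1}p(t)\,dt+r(t_1-t_0)}{\int_{t_0}^{t_1}q(t)\,dt}$. Let $\Psi=\{(t_0,t_1):t_o\le t_0<t_1\le t_f\}$, $\Psi_q=\{(t_0,t_1)\in\Psi:q(t)=0\ \forall t\in[t_0,t_1)\}$ and $\tilde\Psi_q=\{t\in[t_o,t_f):q(t)=0\}$. Then: (i) if $r(\tau)\le0$ for all $\tau>0$, $$\max_{(t_0,t_1)\in\Psi\setminus\Psi_q}\psi(t_0,t_1)=\max_{t\in[t_o,t_f)\setminus\tilde\Psi_q}\lim_{\Delta\to0}\psi(t,t+\Delta);$$ (ii) if $r(\tau)\ge0$ for all $\tau>0$, $$\min_{(t_0,t_1)\in\Psi\setminus\Psi_q}\psi(t_0,t_1)=\min_{t\in[t_o,t_f)\setminus\tilde\Psi_q}\lim_{\Delta\to0}\psi(t,t+\Delta);$$ where $\lim_{\Delta\to0}\psi(t,t+\Delta)=\dfrac{p(t)+\dot r(0)}{q(t)}$.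
   Context: This is the fractional function $\frac{\int p+r}{\int q+s}$ with the linear map $s$ in the denominator identically zero; $r$ is a continuous linear map $\mathbb{R}_{>0}\to\mathbb{R}$. *)

theory Defs
  imports "HOL-Analysis.Analysis"
begin

definition psi :: "(real \<Rightarrow> real) \<Rightarrow> (real \<Rightarrow> real) \<Rightarrow> (real \<Rightarrow> real) \<Rightarrow> real \<Rightarrow> real \<Rightarrow> real" where
  "psi p q r t0 t1 = (integral {t0..t1} p + r (t1 - t0)) / integral {t0..t1} q"

definition Psi_set :: "real \<Rightarrow> real \<Rightarrow> (real \<times> real) set" where
  "Psi_set to tf = {(t0, t1). to \<le> t0 \<and> t0 < t1 \<and> t1 \<le> tf}"

definition Psi_q :: "(real \<Rightarrow> real) \<Rightarrow> real \<Rightarrow> real \<Rightarrow> (real \<times> real) set" where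
  "Psi_q q to tf = {(t0, t1) \<in> Psi_set to tf. \<forall>t\<in>{t0..<t1}. q t = 0}"

definition Psi_q_tilde :: "(real \<Rightarrow> real) \<Rightarrow> real \<Rightarrow> real \<Rightarrow> real set" where
  "Psi_q_tilde q to tf = {t \<in> {to..<tf}. q t = 0}"

end

theory Submission
  imports Defs
begin

lemma avg_lim:
  fixes f :: "real \<Rightarrow> real"
  assumes "continuous_on {t..b} f" "t < b"
  shows "((\<lambda>\<Delta>. integral {t..t+\<Delta>} f / \<Delta>) \<longlongrightarrow> f t) (at_right 0)"
proof -
  have "((\<lambda>x. integral {t..x} f) has_real_derivative f t) (at t within {t..b})"
    using integral_has_real_derivative[OF assms(1)] assms(2) by simp
  hence "((\<lambda>y. (integral {t..y} f - integral {t..t} f)/(y - t)) \<longlongrightarrow> f t) (at_right t)"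
    by (simp only: has_field_derivative_iff at_within_Icc_at_right[OF assms(2)])
  hence "((\<lambda>y. integral {t..y} f /(y - t)) \<longlongrightarrow> f t) (at_right t)" by simp
  then show ?thesis by (subst (asm) filterlim_at_right_to_0) (simp add: add.commute)
qed

lemma ev_lt:
  fixes c :: real
  assumes "0 < c"
  shows "\<forall>\<^sub>F x in at_right 0. x < c"
  using order_tendstoD(2)[OF tendsto_ident_at[of "0::real" "{0<..}"] assms] .

lemma psi_lim:
  fixes p q :: "real \<Rightarrow> real"
  assumes "continuous_on {to..<tf} p" "continuous_on {to..<tf} q" "t \<in> {to..<tf}" "q t \<noteq> 0"
  shows "((\<lambda>\<Delta>. psi p q (\<lambda>\<tau>. \<alpha> * \<tau>) t (t+\<Delta>)) \<longlongrightarrow> (p t+\<alpha>)/q t) (at_right 0)"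
proof -
  define b where "b = (t+tf)/2"
  have tb: "t < b" and sub: "{t..b} \<subseteq> {to..<tf}" using assms(3) by (auto simp: b_def)
  have cp: "continuous_on {t..b} p" using continuous_on_subset[OF assms(1) sub] .
  have cq: "continuous_on {t..b} q" using continuous_on_subset[OF assms(2) sub] .
  have "((\<lambda>\<Delta>. (integral {t..t+\<Delta>} p / \<Delta> + \<alpha>) / (integral {t..t+\<Delta>} q / \<Delta>)) \<longlongrightarrow> (p t+\<alpha>)/q t) (at_right 0)"
    by (intro tendsto_intros avg_lim[OF cp tb] avg_lim[OF cq tb] assms(4))
  moreover have "\<forall>\<^sub>F \<Delta> in at_right 0. (integral {t..t+\<Delta>} p / \<Delta> + \<alpha>) / (integral {t..t+\<Delta>} q / \<Delta>)
      = psi p q (\<lambda>\<tau>. \<alpha> * \<tau>) t (t+\<Delta>)"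
    using eventually_at_right_less[of "0::real"]
  proof (rule eventually_mono)
    fix \<Delta> :: real assume "0 < \<Delta>"
    then show "(integral {t..t+\<Delta>} p / \<Delta> + \<alpha>) / (integral {t..t+\<Delta>} q / \<Delta>)
      = psi p q (\<lambda>\<tau>. \<alpha> * \<tau>) t (t+\<Delta>)"
      by (cases "integral {t..t+\<Delta>} q = 0") (auto simp: psi_def field_simps)
  qed
  ultimately show ?thesis by (rule Lim_transform_eventually)
qed

lemma int_le_ico:
  fixes f g :: "real \<Rightarrow> real"
  assumes "f integrable_on {a..b}" "g integrable_on {a..b}" "\<forall>x\<in>{a..<b}. f x \<le> g x"
  shows "integral {a..b} f \<le> integral {a..b} g"
proof -
  let ?h = "\<lambda>x. if x = b then g x else f x"
  have "integral {a..b} f = integral {a..b} ?h" by (rule integral_spike[of "{b}"]) auto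
  moreover have "?h integrable_on {a..b}" by (rule integrable_spike[OF assms(1), of "{b}"]) auto
  moreover have "integral {a..b} ?h \<le> integral {a..b} g"
    by (rule integral_le) (use calculation assms in auto)
  ultimately show ?thesis by simp
qed

lemma int_pos:
  fixes q :: "real \<Rightarrow> real"
  assumes "continuous_on {to..<tf} q" "q integrable_on {to..tf}" "\<forall>t\<in>{to..<tf}. q t \<ge> 0"
    and "to \<le> t0" "t0 \<le> s" "s < t1" "t1 \<le> tf" "q s > 0"
  shows "integral {t0..t1} q > 0"
proof -
  define b where "b = (s+t1)/2"
  have sb: "s < b" and sub: "{s..b} \<subseteq> {to..<tf}" using assms by (auto simp: b_def)
  have cq: "continuous_on {s..b} q" using continuous_on_subset[OF assms(1) sub] .
  have "\<forall>\<^sub>F \<Delta> in at_right 0. integral {s..s+\<Delta>} q / \<Delta> > 0 \<and> 0 < \<Delta> \<and> \<Delta> < b - s"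
    using order_tendstoD(1)[OF avg_lim[OF cq sb] assms(8)] eventually_at_right_less[of "0::real"]
      ev_lt[of "b - s"] sb by (auto intro: eventually_conj)
  then obtain d where d: "integral {s..s+d} q / d > 0" "0 < d" "d < b - s"
    using eventually_happens'[OF trivial_limit_at_right_real] by blast
  have d1: "integral {s..s+d} q > 0" using d by (simp add: zero_less_divide_iff)
  have qi: "q integrable_on {u..v}" if "to \<le> u" "v \<le> tf" for u v
    using integrable_on_subinterval[OF assms(2)] that by auto
  have i1: "integral {t0..s} q \<ge> 0"
    using int_le_ico[where f="\<lambda>x. 0" and g=q and a=t0 and b=s] qi assms by auto
  have i2: "integral {s+d..t1} q \<ge> 0"
    using int_le_ico[where f="\<lambda>x. 0" and g=q and a="s+d" and b=t1] qi assms d by (auto simp: b_def)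
  have "integral {t0..t1} q = integral {t0..s} q + integral {s..t1} q"
    using Henstock_Kurzweil_Integration.integral_combine[where a=t0 and c=s and b=t1 and f=q] qi assms by auto
  moreover have "integral {s..t1} q = integral {s..s+d} q + integral {s+d..t1} q"
    using Henstock_Kurzweil_Integration.integral_combine[where a=s and c="s+d" and b=t1 and f=q] qi assms d by (auto simp: b_def)
  ultimately show ?thesis using i1 i2 d1 by linarith
qed

lemma key_up:
  fixes p q :: "real \<Rightarrow> real"
  assumes "continuous_on {to..<tf} q"
    and "p integrable_on {to..tf}" and "q integrable_on {to..tf}"
    and "\<forall>t\<in>{to..<tf}. q t \<ge> 0"
    and "\<forall>t\<in>{to..<tf}. q t = 0 \<longrightarrow> p t = 0"
    and "c * \<alpha> \<le> 0" and "c = 1 \<or> c = -1"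
    and M: "\<forall>t\<in>{to..<tf}. q t \<noteq> 0 \<longrightarrow> c * ((p t + \<alpha>) / q t) \<le> c * M"
    and "to \<le> t0" "t0 < t1" "t1 \<le> tf" "s \<in> {t0..<t1}" "q s \<noteq> 0"
  shows "c * psi p q (\<lambda>\<tau>. \<alpha> * \<tau>) t0 t1 \<le> c * M"
proof -
  have qi: "q integrable_on {t0..t1}" and pi: "p integrable_on {t0..t1}"
    using integrable_on_subinterval[OF assms(3), of t0 t1] integrable_on_subinterval[OF assms(2), of t0 t1]
      assms(9,10,11) by auto
  have "s \<in> {to..<tf}" using assms(9,11,12) by auto
  then have "q s \<ge> 0" using assms(4) by blast
  then have s: "q s > 0" using assms(13) by linarith
  have pos: "integral {t0..t1} q > 0"
    by (rule int_pos[OF assms(1,3,4) assms(9) _ _ assms(11) s]) (use assms(12) in auto)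
  have pw: "c * (p t + \<alpha>) \<le> c * M * q t" if "t \<in> {t0..<t1}" for t
  proof -
    have t: "t \<in> {to..<tf}" using that assms(9,11) by auto
    show ?thesis
    proof (cases "q t = 0")
      case True
      then have "p t = 0" using t assms(5) by blast
      then show ?thesis using True assms(6) by simp
    next
      case False
      have "q t \<ge> 0" using t assms(4) by blast
      then have qp: "q t > 0" using False by linarith
      have "c * ((p t + \<alpha>) / q t) \<le> c * M" using M t False by blast
      with qp assms(7) show ?thesis
      proof (elim disjE)
        assume "c = 1" "(c * ((p t + \<alpha>) / q t) \<le> c * M)"
        then show ?thesis using qp by (simp add: pos_divide_le_eq)
      next
        assume "c = -1" "(c * ((p t + \<alpha>) / q t) \<le> c * M)"
        then have "(- p t - \<alpha>) / q t \<le> - M" by simp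
        then have "- p t - \<alpha> \<le> - M * q t" using qp by (simp add: pos_divide_le_eq)
        then show ?thesis using \<open>c = -1\<close> by simp
      qed
    qed
  qed
  have "integral {t0..t1} (\<lambda>t. c * (p t + \<alpha>)) \<le> integral {t0..t1} (\<lambda>t. c * M * q t)"
  proof (rule int_le_ico)
    have "(\<lambda>t. p t + \<alpha>) integrable_on {t0..t1}"
      using integrable_add[OF pi integrable_const_ivl[of \<alpha> t0 t1]] by simp
    from integrable_on_cmult_left[OF this, of c]
    show "(\<lambda>t. c * (p t + \<alpha>)) integrable_on {t0..t1}" by simp
    show "(\<lambda>t. c * M * q t) integrable_on {t0..t1}"
      using integrable_on_cmult_left[OF qi, of "c * M"] by simp
    show "\<forall>x\<in>{t0..<t1}. c * (p x + \<alpha>) \<le> c * M * q x" using pw by blast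
  qed
  moreover have "integral {t0..t1} (\<lambda>t. c * (p t + \<alpha>)) = c * (integral {t0..t1} p + \<alpha> * (t1 - t0))"
  proof -
    have "integral {t0..t1} (\<lambda>t. p t + \<alpha>) = integral {t0..t1} p + integral {t0..t1} (\<lambda>t. \<alpha>)"
      by (rule integral_add[OF pi integrable_const_ivl])
    also have "\<dots> = integral {t0..t1} p + \<alpha> * (t1 - t0)" using assms(10) by simp
    finally show ?thesis by simp
  qed
  moreover have "integral {t0..t1} (\<lambda>t. c * M * q t) = c * M * integral {t0..t1} q"
    by simp
  ultimately have "c * (integral {t0..t1} p + \<alpha> * (t1 - t0)) \<le> c * M * integral {t0..t1} q"
    by (simp only:)
  then have "c * (integral {t0..t1} p + \<alpha> * (t1 - t0)) / integral {t0..t1} q \<le> c * M"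
    using pos by (simp add: pos_divide_le_eq)
  then show ?thesis unfolding psi_def by (simp add: mult.commute)
qed

theorem corollary1:
  fixes p q r :: "real \<Rightarrow> real" and to tf \<alpha> :: real
  assumes "0 \<le> to" and "to < tf"
    and "continuous_on {to..<tf} p" and "continuous_on {to..<tf} q"
    and "p integrable_on {to..tf}" and "q integrable_on {to..tf}"
    and "\<forall>t\<in>{to..<tf}. q t \<ge> 0"
    and "\<forall>t\<in>{to..<tf}. q t = 0 \<longrightarrow> p t = 0"
    and "r = (\<lambda>\<tau>. \<alpha> * \<tau>)"
  shows "(\<forall>t\<in>{to..<tf} - Psi_q_tilde q to tf.
            ((\<lambda>\<Delta>. psi p q r t (t + \<Delta>)) \<longlongrightarrow> (p t + \<alpha>) / q t) (at_right 0))
       \<and> ((\<forall>\<tau>>0. r \<tau> \<le> 0) \<longrightarrow>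
            (SUP x\<in>Psi_set to tf - Psi_q q to tf. ereal (psi p q r (fst x) (snd x)))
          = (SUP t\<in>{to..<tf} - Psi_q_tilde q to tf. ereal ((p t + \<alpha>) / q t)))
       \<and> ((\<forall>\<tau>>0. r \<tau> \<ge> 0) \<longrightarrow>
            (INF x\<in>Psi_set to tf - Psi_q q to tf. ereal (psi p q r (fst x) (snd x)))
          = (INF t\<in>{to..<tf} - Psi_q_tilde q to tf. ereal ((p t + \<alpha>) / q t)))"
proof -
  define A where "A = Psi_set to tf - Psi_q q to tf"
  define B where "B = {to..<tf} - Psi_q_tilde q to tf"
  define f where "f = (\<lambda>x. ereal (psi p q r (fst x) (snd x)))"
  define g where "g = (\<lambda>t. ereal ((p t + \<alpha>) / q t))"
  have Aiff: "x \<in> A \<longleftrightarrow> (to \<le> fst x \<and> fst x < snd x \<and> snd x \<le> tf \<and> (\<exists>s\<in>{fst x..<snd x}. q s \<noteq> 0))" for x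
    by (cases x) (auto simp: A_def Psi_set_def Psi_q_def)
  have Biff: "t \<in> B \<longleftrightarrow> t \<in> {to..<tf} \<and> q t \<noteq> 0" for t
    by (auto simp: B_def Psi_q_tilde_def)
  have lim: "((\<lambda>\<Delta>. psi p q r t (t + \<Delta>)) \<longlongrightarrow> (p t + \<alpha>) / q t) (at_right 0)" if "t \<in> B" for t
    using psi_lim[OF assms(3,4), of t \<alpha>] that Biff assms(9) by auto
  have glim: "((\<lambda>\<Delta>. f (t, t + \<Delta>)) \<longlongrightarrow> g t) (at_right 0)" if "t \<in> B" for t
    using lim[OF that] by (simp add: f_def g_def)
  have evA: "\<forall>\<^sub>F \<Delta> in at_right 0. (t, t + \<Delta>) \<in> A" if "t \<in> B" for t
  proof -
    have tb: "t \<in> {to..<tf}" "q t \<noteq> 0" using that Biff by auto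
    have "\<forall>\<^sub>F \<Delta> in at_right 0. 0 < \<Delta> \<and> \<Delta> < tf - t"
      using eventually_at_right_less[of "0::real"] ev_lt[of "tf - t"] tb by (auto intro: eventually_conj)
    then show ?thesis
    proof (rule eventually_mono)
      fix \<Delta> :: real assume "0 < \<Delta> \<and> \<Delta> < tf - t"
      then show "(t, t + \<Delta>) \<in> A" using tb by (auto simp: Aiff intro!: bexI[of _ t])
    qed
  qed
  have rr: "psi p q r = psi p q (\<lambda>\<tau>. \<alpha> * \<tau>)" using assms(9) by simp
  have up: "x \<in> A \<Longrightarrow> (\<forall>t\<in>B. c * ((p t + \<alpha>) / q t) \<le> c * M) \<Longrightarrow> c * \<alpha> \<le> 0 \<Longrightarrow> c = 1 \<or> c = -1
      \<Longrightarrow> c * psi p q r (fst x) (snd x) \<le> c * M" for x c M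
  proof -
    assume xA: "x \<in> A" and M: "\<forall>t\<in>B. c * ((p t + \<alpha>) / q t) \<le> c * M" and c: "c * \<alpha> \<le> 0" "c = 1 \<or> c = -1"
    obtain s where s: "s \<in> {fst x..<snd x}" "q s \<noteq> 0" and x: "to \<le> fst x" "fst x < snd x" "snd x \<le> tf"
      using xA Aiff by blast
    have M': "\<forall>t\<in>{to..<tf}. q t \<noteq> 0 \<longrightarrow> c * ((p t + \<alpha>) / q t) \<le> c * M" using M Biff by blast
    show ?thesis unfolding rr
      by (rule key_up[OF assms(4,5,6,7,8) c M' x s])
  qed
  have A_ne: "\<exists>s. s \<in> B" if "x \<in> A" for x
    using that Aiff Biff by (metis atLeastLessThan_iff order.trans order_less_le_trans)
  have part2: "(SUP x\<in>A. f x) = (SUP t\<in>B. g t)" if "\<alpha> \<le> 0"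
  proof (rule antisym)
    show "(SUP x\<in>A. f x) \<le> (SUP t\<in>B. g t)"
    proof (rule SUP_least)
      fix x assume xA: "x \<in> A"
      then obtain s where sB: "s \<in> B" using A_ne by blast
      show "f x \<le> (SUP t\<in>B. g t)"
      proof (cases "SUP t\<in>B. g t")
        case (real M)
        have "\<forall>t\<in>B. 1 * ((p t + \<alpha>) / q t) \<le> 1 * M"
        proof
          fix t assume "t \<in> B"
          then have "g t \<le> ereal M" using real SUP_upper[of t B g] by simp
          then show "1 * ((p t + \<alpha>) / q t) \<le> 1 * M" by (simp add: g_def)
        qed
        from up[OF xA this] that have "psi p q r (fst x) (snd x) \<le> M" by simp
        then show ?thesis using real by (simp add: f_def)
      next
        case PInf then show ?thesis by simp
      next
        case MInf
        then have "g s \<le> -\<infinity>" using SUP_upper[of s B g] sB by simp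
        then show ?thesis by (simp add: g_def)
      qed
    qed
    show "(SUP t\<in>B. g t) \<le> (SUP x\<in>A. f x)"
    proof (rule SUP_least)
      fix t assume tB: "t \<in> B"
      show "g t \<le> (SUP x\<in>A. f x)"
      proof (rule tendsto_upperbound[OF glim[OF tB]])
        show "\<forall>\<^sub>F \<Delta> in at_right 0. f (t, t + \<Delta>) \<le> (SUP x\<in>A. f x)"
          using evA[OF tB] by (rule eventually_mono) (rule SUP_upper)
      qed (simp add: trivial_limit_at_right_real)
    qed
  qed
  have part3: "(INF x\<in>A. f x) = (INF t\<in>B. g t)" if "\<alpha> \<ge> 0"
  proof (rule antisym)
    show "(INF x\<in>A. f x) \<ge> (INF t\<in>B. g t)"
    proof (rule INF_greatest)
      fix x assume xA: "x \<in> A"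
      then obtain s where sB: "s \<in> B" using A_ne by blast
      show "f x \<ge> (INF t\<in>B. g t)"
      proof (cases "INF t\<in>B. g t")
        case (real M)
        have "\<forall>t\<in>B. (-1) * ((p t + \<alpha>) / q t) \<le> (-1) * M"
        proof
          fix t assume "t \<in> B"
          then have "g t \<ge> ereal M" using real INF_lower[of t B g] by simp
          then have "M \<le> (p t + \<alpha>) / q t" by (simp add: g_def)
          then show "(-1) * ((p t + \<alpha>) / q t) \<le> (-1) * M" by linarith
        qed
        from up[OF xA this] that have "psi p q r (fst x) (snd x) \<ge> M" by simp
        then show ?thesis using real by (simp add: f_def)
      next
        case MInf then show ?thesis by simp
      next
        case PInf
        then have "g s \<ge> \<infinity>" using INF_lower[of s B g] sB by simp
        then show ?thesis by (simp add: g_def)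
      qed
    qed
    show "(INF t\<in>B. g t) \<ge> (INF x\<in>A. f x)"
    proof (rule INF_greatest)
      fix t assume tB: "t \<in> B"
      show "g t \<ge> (INF x\<in>A. f x)"
      proof (rule tendsto_lowerbound[OF glim[OF tB]])
        show "\<forall>\<^sub>F \<Delta> in at_right 0. f (t, t + \<Delta>) \<ge> (INF x\<in>A. f x)"
          using evA[OF tB] by (rule eventually_mono) (rule INF_lower)
      qed (simp add: trivial_limit_at_right_real)
    qed
  qed
  have a1: "\<alpha> \<le> 0" if "\<forall>\<tau>>0. r \<tau> \<le> 0"
    using that[rule_format, of 1] assms(9) by simp
  have a2: "\<alpha> \<ge> 0" if "\<forall>\<tau>>0. r \<tau> \<ge> 0"
    using that[rule_format, of 1] assms(9) by simp
  show ?thesis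
    using lim part2[OF a1] part3[OF a2] unfolding A_def B_def f_def g_def by blast
qed

end
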